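(* Let $n_1,m_1,n_2,m_2\ge1$ be integers with $n_1+n_2=m_1+m_2$ and let $\mathbf{S}=(1^{n_1},\ast^{m_1},1^{n_2},\ast^{m_2})$. Then \[ |NC_2(\mathbf{S})|=1+\min\{n_1,m_1,n_2,m_2\},\qquad |NC(\mathbf{S})|=1+2\min\{n_1,m_1,n_2,m_2\}. \]
   Context: $1^k$ denotes $k$ consecutive entries $1$ (similarly $\ast^k$); $\mathbf{S}$ has length $N=2(n_1+n_2)$. $NC(\mathbf{S})$ is the set of non-crossing partitions of $\{1,\ldots,N\}$ each of whose blocks has even size and, with its elements in increasing order, has corresponding entries of $\mathbf{S}$ alternating between $1$ and $\ast$. $NC_2(\mathbf{S})$ is the subset of $NC(\mathbf{S})$ consisting of pairings (all blocks of size $2$). *)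

theory Defs
  imports Main "HOL-Library.Disjoint_Sets"
begin

text \<open>A word over the alphabet {1, *} is a list of booleans: True encodes 1, False encodes *.
  Positions are 1..length s; the entry at position i is s ! (i - 1).\<close>

definition noncrossing :: "nat set set \<Rightarrow> bool" where
  "noncrossing P \<longleftrightarrow> (\<forall>B\<in>P. \<forall>B'\<in>P. B \<noteq> B' \<longrightarrow>
     \<not> (\<exists>a b c d. a < b \<and> b < c \<and> c < d \<and> a \<in> B \<and> c \<in> B \<and> b \<in> B' \<and> d \<in> B'))"

definition alternating_block :: "bool list \<Rightarrow> nat set \<Rightarrow> bool" where
  "alternating_block s B \<longleftrightarrow>
     (let xs = sorted_list_of_set B in
      \<forall>i. Suc i < length xs \<longrightarrow> s ! (xs ! i - 1) \<noteq> s ! (xs ! Suc i - 1))"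

definition NC :: "bool list \<Rightarrow> nat set set set" where
  "NC s = {P. partition_on {1..length s} P \<and> noncrossing P \<and>
               (\<forall>B\<in>P. even (card B) \<and> alternating_block s B)}"

definition NC2 :: "bool list \<Rightarrow> nat set set set" where
  "NC2 s = {P \<in> NC s. \<forall>B\<in>P. card B = 2}"

definition word4 :: "nat \<Rightarrow> nat \<Rightarrow> nat \<Rightarrow> nat \<Rightarrow> bool list" where
  "word4 n1 m1 n2 m2 = replicate n1 True @ replicate m1 False @ replicate n2 True @ replicate m2 False"

end

theory Submission
  imports Defs
begin


lemma alt_iff:
  assumes "finite B"
  shows "alternating_block t B \<longleftrightarrow>
    (\<forall>x\<in>B. \<forall>y\<in>B. x < y \<longrightarrow> (\<forall>z\<in>B. \<not> (x < z \<and> z < y)) \<longrightarrow> t ! (x - 1) \<noteq> t ! (y - 1))"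
proof -
  define xs where "xs = sorted_list_of_set B"
  have set: "set xs = B" using assms by (simp add: xs_def)
  have ss: "sorted_wrt (<) xs" by (simp add: xs_def strict_sorted_list_of_set)
  have lessI: "i < j" if "xs ! i < xs ! j" "i < length xs" "j < length xs" for i j
  proof (rule ccontr)
    assume "\<not> i < j"
    then have "j \<le> i" by simp
    then have "xs ! j \<le> xs ! i" using ss that
      by (metis le_neq_implies_less order.order_iff_strict sorted_wrt_nth_less)
    then show False using that by simp
  qed
  show ?thesis
  proof
    assume A: "alternating_block t B"
    show "\<forall>x\<in>B. \<forall>y\<in>B. x < y \<longrightarrow> (\<forall>z\<in>B. \<not> (x < z \<and> z < y)) \<longrightarrow> t ! (x - 1) \<noteq> t ! (y - 1)"
    proof (intro ballI impI)
      fix x y assume x: "x \<in> B" and y: "y \<in> B" and xy: "x < y" and nz: "\<forall>z\<in>B. \<not> (x < z \<and> z < y)"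
      obtain i where i: "i < length xs" "xs ! i = x" using x set by (metis in_set_conv_nth)
      obtain j where j: "j < length xs" "xs ! j = y" using y set by (metis in_set_conv_nth)
      have ij: "i < j" using lessI i j xy by blast
      have "j = Suc i"
      proof (rule ccontr)
        assume "j \<noteq> Suc i"
        then have "Suc i < j" using ij by simp
        then have "xs ! i < xs ! Suc i" "xs ! Suc i < xs ! j"
          using ss j by (auto intro: sorted_wrt_nth_less)
        moreover have "xs ! Suc i \<in> B" using \<open>Suc i < j\<close> j set by auto
        ultimately show False using nz i j by blast
      qed
      then show "t ! (x - 1) \<noteq> t ! (y - 1)" using A j i unfolding alternating_block_def xs_def[symmetric] Let_def
        by auto
    qed
  next
    assume R: "\<forall>x\<in>B. \<forall>y\<in>B. x < y \<longrightarrow> (\<forall>z\<in>B. \<not> (x < z \<and> z < y)) \<longrightarrow> t ! (x - 1) \<noteq> t ! (y - 1)"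
    show "alternating_block t B"
      unfolding alternating_block_def xs_def[symmetric] Let_def
    proof (intro allI impI)
      fix i assume i: "Suc i < length xs"
      have x: "xs ! i \<in> B" "xs ! Suc i \<in> B" using i set by auto
      have lt: "xs ! i < xs ! Suc i" using ss i by (auto intro: sorted_wrt_nth_less)
      have "\<forall>z\<in>B. \<not> (xs ! i < z \<and> z < xs ! Suc i)"
      proof (intro ballI notI)
        fix z assume "z \<in> B" "xs ! i < z \<and> z < xs ! Suc i"
        then obtain m where m: "m < length xs" "xs ! m = z" using set by (metis in_set_conv_nth)
        have "i < m" "m < Suc i" using lessI m \<open>xs ! i < z \<and> z < xs ! Suc i\<close> i by auto
        then show False by simp
      qed
      then show "t ! (xs ! i - 1) \<noteq> t ! (xs ! Suc i - 1)" using R x lt by blast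
    qed
  qed
qed



locale W =
  fixes n1 m1 n2 m2 :: nat
  assumes n1: "n1 \<ge> 1" and m1: "m1 \<ge> 1" and n2: "n2 \<ge> 1" and m2: "m2 \<ge> 1"
    and bal: "n1 + n2 = m1 + m2"
begin

abbreviation N where "N \<equiv> n1 + m1 + n2 + m2"
abbreviation s where "s \<equiv> word4 n1 m1 n2 m2"

definition lt :: "nat \<Rightarrow> bool" where
  "lt i \<longleftrightarrow> i \<le> n1 \<or> (n1 + m1 < i \<and> i \<le> n1 + m1 + n2)"

definition run :: "nat \<Rightarrow> nat" where
  "run i = (if i \<le> n1 then 0 else if i \<le> n1 + m1 then 1 else if i \<le> n1 + m1 + n2 then 2 else 3)"

lemma length_s: "length s = N" by (simp add: word4_def)

lemma s_nth: assumes "1 \<le> i" "i \<le> N" shows "s ! (i - 1) = lt i"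
proof -
  consider "i \<le> n1" | "n1 < i \<and> i \<le> n1 + m1" | "n1 + m1 < i \<and> i \<le> n1 + m1 + n2" | "n1 + m1 + n2 < i"
    by linarith
  then show ?thesis
  proof cases
    case 1 then show ?thesis using assms by (auto simp: word4_def nth_append lt_def)
  next
    case 2 then show ?thesis using assms by (auto simp: word4_def nth_append lt_def)
  next
    case 3 then show ?thesis using assms by (auto simp: word4_def nth_append lt_def)
  next
    case 4 then show ?thesis using assms by (auto simp: word4_def nth_append lt_def)
  qed
qed

lemma lt_run: "lt i \<longleftrightarrow> even (run i)"
  by (auto simp: lt_def run_def)

lemma run_mono: "x \<le> y \<Longrightarrow> run x \<le> run y"
  by (auto simp: run_def)

lemma run_le3: "run x \<le> 3" by (auto simp: run_def)

definition sg :: "nat \<Rightarrow> int" where "sg i = (if lt i then 1 else -1)"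

definition H :: "nat \<Rightarrow> int" where
  "H k = (if k \<le> n1 then int k else if k \<le> n1 + m1 then 2 * int n1 - int k
          else if k \<le> n1 + m1 + n2 then int k - 2 * int m1 else 2 * int n1 + 2 * int n2 - int k)"

lemma h_closed: "k \<le> N \<Longrightarrow> (\<Sum>i\<in>{1..k}. sg i) = H k"
proof (induction k)
  case 0 then show ?case by (simp add: H_def)
next
  case (Suc k)
  have "{1..Suc k} = insert (Suc k) {1..k}" by auto
  then have "(\<Sum>i\<in>{1..Suc k}. sg i) = sg (Suc k) + (\<Sum>i\<in>{1..k}. sg i)" by simp
  also have "\<dots> = sg (Suc k) + H k" using Suc by simp
  also have "\<dots> = H (Suc k)" using Suc.prems bal by (auto simp: H_def sg_def lt_def)
  finally show ?case .
qed

lemma gap_sum: assumes "x < y" "y \<le> N"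
  shows "(\<Sum>i\<in>{x<..<y}. sg i) = H (y - 1) - H x"
proof -
  have "{1..y-1} = {1..x} \<union> {x<..<y}" using assms by auto
  moreover have "{1..x} \<inter> {x<..<y} = {}" by auto
  ultimately have "(\<Sum>i\<in>{1..y-1}. sg i) = (\<Sum>i\<in>{1..x}. sg i) + (\<Sum>i\<in>{x<..<y}. sg i)"
    by (simp add: sum.union_disjoint)
  moreover have "y - 1 \<le> N" "x \<le> N" using assms by auto
  ultimately show ?thesis using h_closed[of "y-1"] h_closed[of x] by simp
qed

end

context W begin

definition AD :: "nat \<Rightarrow> nat set" where "AD j = {j+1, N-j}"
definition BC :: "nat \<Rightarrow> nat set" where "BC b = {b, 2*(n1+m1)+1-b}"
definition AB :: "nat \<Rightarrow> nat set" where "AB j = {j+1, 2*n1-j}"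
definition CD :: "nat \<Rightarrow> nat set" where "CD j = {j+1+2*m1, N-j}"
definition FB :: "nat \<Rightarrow> nat set" where "FB j = {j+1, 2*n1-j, j+1+2*m1, N-j}"

definition Expl :: "nat \<Rightarrow> nat \<Rightarrow> nat set set" where
  "Expl k q = {AD j|j. j<n1 \<and> j<m2 \<and> j<k}
     \<union> {BC b|b. n1<b \<and> b \<le> n1+m1 \<and> 2*n1 < b+k \<and> 2*n1 < b+m2}
     \<union> {AB j|j. j<n1 \<and> n1 \<le> j+m1 \<and> k+q \<le> j}
     \<union> {CD j|j. j<m2 \<and> n1 \<le> j+m1 \<and> k+q \<le> j}
     \<union> (if q = 1 then {FB k} else {})"

definition Par :: "(nat \<times> nat) set" where
  "Par = {(k,q). q \<le> 1 \<and> n1 - m1 \<le> k \<and> k + q \<le> min n1 m2}"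

definition blockof :: "nat \<Rightarrow> nat \<Rightarrow> nat \<Rightarrow> nat set" where
  "blockof k q i =
    (if i \<le> n1 then (if i - 1 < k then AD (i-1) else if i - 1 = k \<and> q = 1 then FB k else AB (i-1))
     else if i \<le> n1+m1 then (if 2*n1 < i + k then BC i else if 2*n1 - i = k \<and> q = 1 then FB k else AB (2*n1 - i))
     else if i \<le> n1+m1+n2 then (if i < 2*m1+1+k then BC (2*(n1+m1)+1-i)
          else if i - 1 - 2*m1 = k \<and> q = 1 then FB k else CD (i-1-2*m1))
     else (if N - i < k then AD (N-i) else if N - i = k \<and> q = 1 then FB k else CD (N-i)))"

lemma ExplI_AD: "j<n1 \<Longrightarrow> j<m2 \<Longrightarrow> j<k \<Longrightarrow> AD j \<in> Expl k q"
  unfolding Expl_def by blast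
lemma ExplI_BC: "n1<b \<Longrightarrow> b \<le> n1+m1 \<Longrightarrow> 2*n1 < b+k \<Longrightarrow> 2*n1 < b+m2 \<Longrightarrow> BC b \<in> Expl k q"
  unfolding Expl_def by blast
lemma ExplI_AB: "j<n1 \<Longrightarrow> n1 \<le> j+m1 \<Longrightarrow> k+q \<le> j \<Longrightarrow> AB j \<in> Expl k q"
  unfolding Expl_def by blast
lemma ExplI_CD: "j<m2 \<Longrightarrow> n1 \<le> j+m1 \<Longrightarrow> k+q \<le> j \<Longrightarrow> CD j \<in> Expl k q"
  unfolding Expl_def by blast
lemma ExplI_FB: "FB k \<in> Expl k 1"
  unfolding Expl_def by simp

lemma E1:
  assumes P: "(k,q) \<in> Par" and i: "1 \<le> i" "i \<le> N"
  shows "i \<in> blockof k q i \<and> blockof k q i \<in> Expl k q"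
proof -
  have q: "q \<le> 1" "n1 - m1 \<le> k" "k + q \<le> n1" "k + q \<le> m2" using P by (auto simp: Par_def)
  consider "i \<le> n1" | "n1 < i \<and> i \<le> n1 + m1" | "n1 + m1 < i \<and> i \<le> n1 + m1 + n2" | "n1 + m1 + n2 < i"
    by linarith
  then show ?thesis
  proof cases
    case 1
    consider "i - 1 < k" | "i - 1 = k \<and> q = 1" | "\<not> i - 1 < k \<and> \<not> (i - 1 = k \<and> q = 1)" by blast
    then show ?thesis
    proof cases
      case a: 1
      then have "blockof k q i = AD (i-1)" using 1 by (auto simp add: blockof_def)
      moreover have "AD (i-1) \<in> Expl k q" using a q 1 i by (intro ExplI_AD) auto
      moreover have "i \<in> AD (i-1)" using i by (simp add: AD_def)
      ultimately show ?thesis by simp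
    next
      case a: 2
      then have "blockof k q i = FB k" using 1 by (auto simp add: blockof_def)
      moreover have "FB k \<in> Expl k q" using a ExplI_FB by simp
      moreover have "i \<in> FB k" using i a by (auto simp add: FB_def)
      ultimately show ?thesis by simp
    next
      case a: 3
      then have "blockof k q i = AB (i-1)" using 1 by (auto simp add: blockof_def)
      moreover have "AB (i-1) \<in> Expl k q" using a q 1 i by (intro ExplI_AB) auto
      moreover have "i \<in> AB (i-1)" using i by (simp add: AB_def)
      ultimately show ?thesis by simp
    qed
  next
    case 2
    consider "2*n1 < i + k" | "\<not> 2*n1 < i + k \<and> 2*n1 - i = k \<and> q = 1" | "\<not> 2*n1 < i + k \<and> \<not> (2*n1 - i = k \<and> q = 1)" by blast
    then show ?thesis
    proof cases
      case a: 1
      then have "blockof k q i = BC i" using 2 by (auto simp add: blockof_def)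
      moreover have "BC i \<in> Expl k q" using a q 2 i by (intro ExplI_BC) auto
      moreover have "i \<in> BC i" using i by (simp add: BC_def)
      ultimately show ?thesis by simp
    next
      case a: 2
      then have "blockof k q i = FB k" using 2 by (auto simp add: blockof_def)
      moreover have "FB k \<in> Expl k q" using a ExplI_FB by simp
      moreover have "i \<in> FB k" using i a 2 by (auto simp add: FB_def)
      ultimately show ?thesis by simp
    next
      case a: 3
      then have "blockof k q i = AB (2*n1-i)" using 2 by (auto simp add: blockof_def)
      moreover have "AB (2*n1-i) \<in> Expl k q" using a q 2 i by (intro ExplI_AB) auto
      moreover have "i \<in> AB (2*n1-i)" using i a 2 by (auto simp add: AB_def)
      ultimately show ?thesis by simp
    qed
  next
    case 3
    consider "i < 2*m1+1+k" | "\<not> i < 2*m1+1+k \<and> i - 1 - 2*m1 = k \<and> q = 1" | "\<not> i < 2*m1+1+k \<and> \<not> (i - 1 - 2*m1 = k \<and> q = 1)" by blast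
    then show ?thesis
    proof cases
      case a: 1
      then have "blockof k q i = BC (2*(n1+m1)+1-i)" using 3 by (auto simp add: blockof_def)
      moreover have "BC (2*(n1+m1)+1-i) \<in> Expl k q" using a q 3 i bal by (intro ExplI_BC) auto
      moreover have "2*(n1+m1)+1-(2*(n1+m1)+1-i) = i" using 3 a q by auto
      then have "i \<in> BC (2*(n1+m1)+1-i)" by (simp add: BC_def)
      ultimately show ?thesis by simp
    next
      case a: 2
      then have "blockof k q i = FB k" using 3 by (auto simp add: blockof_def)
      moreover have "FB k \<in> Expl k q" using a ExplI_FB by simp
      moreover have "i \<in> FB k" using i a 3 by (auto simp add: FB_def)
      ultimately show ?thesis by simp
    next
      case a: 3
      then have "blockof k q i = CD (i-1-2*m1)" using 3 by (auto simp add: blockof_def)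
      moreover have "CD (i-1-2*m1) \<in> Expl k q" using a q 3 i bal by (intro ExplI_CD) auto
      moreover have "i \<in> CD (i-1-2*m1)" using i a 3 by (auto simp add: CD_def)
      ultimately show ?thesis by simp
    qed
  next
    case 4
    consider "N - i < k" | "\<not> N - i < k \<and> N - i = k \<and> q = 1" | "\<not> N - i < k \<and> \<not> (N - i = k \<and> q = 1)" by blast
    then show ?thesis
    proof cases
      case a: 1
      then have "blockof k q i = AD (N-i)" using 4 by (auto simp add: blockof_def)
      moreover have "AD (N-i) \<in> Expl k q" using a q 4 i bal by (intro ExplI_AD) auto
      moreover have "i \<in> AD (N-i)" using i by (simp add: AD_def)
      ultimately show ?thesis by simp
    next
      case a: 2
      then have "blockof k q i = FB k" using 4 by (auto simp add: blockof_def)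
      moreover have "FB k \<in> Expl k q" using a ExplI_FB by simp
      moreover have "i \<in> FB k" using i a 4 by (auto simp add: FB_def)
      ultimately show ?thesis by simp
    next
      case a: 3
      then have "blockof k q i = CD (N-i)" using 4 by (auto simp add: blockof_def)
      moreover have "CD (N-i) \<in> Expl k q" using a q 4 i bal by (intro ExplI_CD) auto
      moreover have "i \<in> CD (N-i)" using i a 4 by (auto simp add: CD_def)
      ultimately show ?thesis by simp
    qed
  qed
qed

lemma E2_AD: assumes "j<n1" "j<m2" "j<k" "y \<in> AD j" shows "blockof k q y = AD j"
proof -
  have "y = j+1 \<or> y = N - j" using assms by (auto simp: AD_def)
  then show ?thesis
  proof
    assume "y = j+1" then show ?thesis using assms by (auto simp add: blockof_def)
  next
    assume y: "y = N - j"
    have "\<not> y \<le> n1+m1+n2" "N - y = j" using assms y by auto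
    then show ?thesis using assms y by (auto simp add: blockof_def)
  qed
qed

lemma E2_BC: assumes "n1<b" "b \<le> n1+m1" "2*n1 < b+k" "2*n1 < b+m2" "y \<in> BC b"
  shows "blockof k q y = BC b"
proof -
  have "y = b \<or> y = 2*(n1+m1)+1-b" using assms by (auto simp: BC_def)
  then show ?thesis
  proof
    assume "y = b" then show ?thesis using assms by (auto simp add: blockof_def)
  next
    assume y: "y = 2*(n1+m1)+1-b"
    have "\<not> y \<le> n1+m1" "y \<le> n1+m1+n2" "y < 2*m1+1+k" "2*(n1+m1)+1-y = b"
      using assms y bal by auto
    then show ?thesis using assms y by (auto simp add: blockof_def)
  qed
qed

lemma E2_AB: assumes "j<n1" "n1 \<le> j+m1" "k+q \<le> j" "y \<in> AB j"
  shows "blockof k q y = AB j"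
proof -
  have "y = j+1 \<or> y = 2*n1-j" using assms by (auto simp: AB_def)
  then show ?thesis
  proof
    assume "y = j+1" then show ?thesis using assms by (auto simp add: blockof_def)
  next
    assume y: "y = 2*n1-j"
    have "\<not> y \<le> n1" "y \<le> n1+m1" "\<not> 2*n1 < y + k" "2*n1 - y = j" "\<not> (j = k \<and> q = 1)"
      using assms y bal by auto
    then show ?thesis using assms y by (auto simp add: blockof_def)
  qed
qed

lemma E2_CD: assumes "j<m2" "n1 \<le> j+m1" "k+q \<le> j" "y \<in> CD j"
  shows "blockof k q y = CD j"
proof -
  have "y = j+1+2*m1 \<or> y = N-j" using assms by (auto simp: CD_def)
  then show ?thesis
  proof
    assume y: "y = j+1+2*m1"
    have "\<not> y \<le> n1+m1" "y \<le> n1+m1+n2" "\<not> y < 2*m1+1+k" "y - 1 - 2*m1 = j" "\<not> (j = k \<and> q = 1)"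
      using assms y bal by auto
    then show ?thesis using assms y by (auto simp add: blockof_def)
  next
    assume y: "y = N-j"
    have "\<not> y \<le> n1+m1+n2" "N - y = j" "\<not> (j = k \<and> q = 1)"
      using assms y bal by auto
    then show ?thesis using assms y by (auto simp add: blockof_def)
  qed
qed

lemma E2_FB: assumes "(k,1) \<in> Par" "y \<in> FB k"
  shows "blockof k 1 y = FB k"
proof -
  have q: "n1 - m1 \<le> k" "k + 1 \<le> n1" "k + 1 \<le> m2" using assms by (auto simp: Par_def)
  have "y = k+1 \<or> y = 2*n1-k \<or> y = k+1+2*m1 \<or> y = N-k" using assms by (auto simp: FB_def)
  then show ?thesis
  proof (elim disjE)
    assume "y = k+1" then show ?thesis using q by (auto simp add: blockof_def)
  next
    assume y: "y = 2*n1-k"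
    have "\<not> y \<le> n1" "y \<le> n1+m1" "\<not> 2*n1 < y + k" "2*n1 - y = k" using q y by auto
    then show ?thesis using y by (auto simp add: blockof_def)
  next
    assume y: "y = k+1+2*m1"
    have "\<not> y \<le> n1+m1" "y \<le> n1+m1+n2" "\<not> y < 2*m1+1+k" "y - 1 - 2*m1 = k"
      using q y bal by auto
    then show ?thesis using y by (auto simp add: blockof_def)
  next
    assume y: "y = N-k"
    have "\<not> y \<le> n1+m1+n2" "N - y = k" using q y bal by auto
    then show ?thesis using y by (auto simp add: blockof_def)
  qed
qed

lemma E2:
  assumes P: "(k,q) \<in> Par" and Y: "Y \<in> Expl k q" and y: "y \<in> Y"
  shows "blockof k q y = Y"
proof -
  have q: "q \<le> 1" using P by (auto simp: Par_def)
  from Y show ?thesis unfolding Expl_def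
  proof (elim UnE)
    assume "Y \<in> {AD j|j. j<n1 \<and> j<m2 \<and> j<k}"
    then show ?thesis using E2_AD y by blast
  next
    assume "Y \<in> {BC b|b. n1<b \<and> b \<le> n1+m1 \<and> 2*n1 < b+k \<and> 2*n1 < b+m2}"
    then show ?thesis using E2_BC y by blast
  next
    assume "Y \<in> {AB j|j. j<n1 \<and> n1 \<le> j+m1 \<and> k+q \<le> j}"
    then show ?thesis using E2_AB y by blast
  next
    assume "Y \<in> {CD j|j. j<m2 \<and> n1 \<le> j+m1 \<and> k+q \<le> j}"
    then show ?thesis using E2_CD y by blast
  next
    assume "Y \<in> (if q = 1 then {FB k} else {})"
    then show ?thesis using E2_FB y P by (cases "q = 1") auto
  qed
qed

lemma Expl_sub: assumes "(k,q) \<in> Par" "Y \<in> Expl k q" shows "Y \<subseteq> {1..N}"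
proof
  fix y assume "y \<in> Y"
  have q: "q \<le> 1" "n1 - m1 \<le> k" "k + q \<le> n1" "k + q \<le> m2" using assms by (auto simp: Par_def)
  from assms(2) \<open>y \<in> Y\<close> show "y \<in> {1..N}" unfolding Expl_def using q bal
    by (auto simp: AD_def BC_def AB_def CD_def FB_def split: if_splits)
qed

lemma Expl_part: assumes "(k,q) \<in> Par" shows "partition_on {1..N} (Expl k q)"
proof (rule partition_onI)
  show "\<Union>(Expl k q) = {1..N}"
  proof
    show "\<Union>(Expl k q) \<subseteq> {1..N}" using Expl_sub[OF assms] by blast
    show "{1..N} \<subseteq> \<Union>(Expl k q)" using E1[OF assms] by fastforce
  qed
  show "\<And>p p'. p \<in> Expl k q \<Longrightarrow> p' \<in> Expl k q \<Longrightarrow> p \<noteq> p' \<Longrightarrow> disjnt p p'"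
    using E2[OF assms] unfolding disjnt_def by blast
  show "{} \<notin> Expl k q"
    using assms by (auto simp: Expl_def AD_def BC_def AB_def CD_def FB_def)
qed

end

context W begin

definition fAD :: "nat \<Rightarrow> nat \<Rightarrow> nat set \<Rightarrow> bool" where
  "fAD k q Y \<longleftrightarrow> (\<exists>j e. Y = {j+1, e} \<and> e + j = N \<and> j<n1 \<and> j<m2 \<and> j<k)"
definition fBC :: "nat \<Rightarrow> nat \<Rightarrow> nat set \<Rightarrow> bool" where
  "fBC k q Y \<longleftrightarrow> (\<exists>j e. Y = {j, e} \<and> j + e = 2*(n1+m1)+1 \<and> n1<j \<and> j \<le> n1+m1 \<and> 2*n1 < j+k \<and> 2*n1 < j+m2)"
definition fAB :: "nat \<Rightarrow> nat \<Rightarrow> nat set \<Rightarrow> bool" where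
  "fAB k q Y \<longleftrightarrow> (\<exists>j e. Y = {j+1, e} \<and> e + j = 2*n1 \<and> j<n1 \<and> n1 \<le> j+m1 \<and> k+q \<le> j)"
definition fCD :: "nat \<Rightarrow> nat \<Rightarrow> nat set \<Rightarrow> bool" where
  "fCD k q Y \<longleftrightarrow> (\<exists>j e. Y = {j+1+2*m1, e} \<and> e + j = N \<and> j<m2 \<and> n1 \<le> j+m1 \<and> k+q \<le> j)"
definition fFB :: "nat \<Rightarrow> nat \<Rightarrow> nat set \<Rightarrow> bool" where
  "fFB k q Y \<longleftrightarrow> (\<exists>e f. Y = {k+1, e, k+1+2*m1, f} \<and> q = 1 \<and> e + k = 2*n1 \<and> f + k = N)"

lemma Expl_cases:
  assumes P: "(k,q) \<in> Par" and Y: "Y \<in> Expl k q"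
  shows "fAD k q Y \<or> fBC k q Y \<or> fAB k q Y \<or> fCD k q Y \<or> fFB k q Y"
proof -
  have q: "q \<le> 1" "n1 - m1 \<le> k" "k + q \<le> n1" "k + q \<le> m2" using P by (auto simp: Par_def)
  from Y show ?thesis unfolding Expl_def
  proof (elim UnE)
    assume "Y \<in> {AD j|j. j<n1 \<and> j<m2 \<and> j<k}"
    then obtain j where "Y = AD j" "j<n1" "j<m2" "j<k" by blast
    then have "Y = {j+1, N-j} \<and> (N-j) + j = N \<and> j<n1 \<and> j<m2 \<and> j<k" by (auto simp: AD_def)
    then show ?thesis unfolding fAD_def by blast
  next
    assume "Y \<in> {BC b|b. n1<b \<and> b \<le> n1+m1 \<and> 2*n1 < b+k \<and> 2*n1 < b+m2}"
    then obtain b where "Y = BC b" "n1<b" "b \<le> n1+m1" "2*n1 < b+k" "2*n1 < b+m2" by blast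
    then have "Y = {b, 2*(n1+m1)+1-b} \<and> b + (2*(n1+m1)+1-b) = 2*(n1+m1)+1 \<and> n1<b \<and> b \<le> n1+m1 \<and> 2*n1 < b+k \<and> 2*n1 < b+m2"
      by (auto simp: BC_def)
    then show ?thesis unfolding fBC_def by blast
  next
    assume "Y \<in> {AB j|j. j<n1 \<and> n1 \<le> j+m1 \<and> k+q \<le> j}"
    then obtain j where "Y = AB j" "j<n1" "n1 \<le> j+m1" "k+q \<le> j" by blast
    then have "Y = {j+1, 2*n1-j} \<and> (2*n1-j) + j = 2*n1 \<and> j<n1 \<and> n1 \<le> j+m1 \<and> k+q \<le> j" by (auto simp: AB_def)
    then show ?thesis unfolding fAB_def by blast
  next
    assume "Y \<in> {CD j|j. j<m2 \<and> n1 \<le> j+m1 \<and> k+q \<le> j}"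
    then obtain j where "Y = CD j" "j<m2" "n1 \<le> j+m1" "k+q \<le> j" by blast
    then have "Y = {j+1+2*m1, N-j} \<and> (N-j) + j = N \<and> j<m2 \<and> n1 \<le> j+m1 \<and> k+q \<le> j" by (auto simp: CD_def)
    then show ?thesis unfolding fCD_def by blast
  next
    assume "Y \<in> (if q = 1 then {FB k} else {})"
    then have "q = 1" "Y = FB k" by (auto split: if_splits)
    then have "Y = {k+1, 2*n1-k, k+1+2*m1, N-k} \<and> q = 1 \<and> (2*n1-k) + k = 2*n1 \<and> (N-k) + k = N"
      using q by (auto simp: FB_def)
    then show ?thesis unfolding fFB_def by blast
  qed
qed

lemma nc_AD_AD: assumes "fAD k q Y" "fAD k q Y'" "q \<le> 1" "n1 - m1 \<le> k" "k + q \<le> n1" "k + q \<le> m2"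
    "a < b" "b < c" "c < d" "a \<in> Y" "c \<in> Y" "b \<in> Y'" "d \<in> Y'"
  shows False
  using assms bal unfolding fAD_def fAD_def by auto

lemma nc_AD_BC: assumes "fAD k q Y" "fBC k q Y'" "q \<le> 1" "n1 - m1 \<le> k" "k + q \<le> n1" "k + q \<le> m2"
    "a < b" "b < c" "c < d" "a \<in> Y" "c \<in> Y" "b \<in> Y'" "d \<in> Y'"
  shows False
  using assms bal unfolding fAD_def fBC_def by auto

lemma nc_AD_AB: assumes "fAD k q Y" "fAB k q Y'" "q \<le> 1" "n1 - m1 \<le> k" "k + q \<le> n1" "k + q \<le> m2"
    "a < b" "b < c" "c < d" "a \<in> Y" "c \<in> Y" "b \<in> Y'" "d \<in> Y'"
  shows False
  using assms bal unfolding fAD_def fAB_def by auto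

lemma nc_AD_CD: assumes "fAD k q Y" "fCD k q Y'" "q \<le> 1" "n1 - m1 \<le> k" "k + q \<le> n1" "k + q \<le> m2"
    "a < b" "b < c" "c < d" "a \<in> Y" "c \<in> Y" "b \<in> Y'" "d \<in> Y'"
  shows False
  using assms bal unfolding fAD_def fCD_def by auto

lemma nc_AD_FB: assumes "fAD k q Y" "fFB k q Y'" "q \<le> 1" "n1 - m1 \<le> k" "k + q \<le> n1" "k + q \<le> m2"
    "a < b" "b < c" "c < d" "a \<in> Y" "c \<in> Y" "b \<in> Y'" "d \<in> Y'"
  shows False
  using assms bal unfolding fAD_def fFB_def by auto

lemma nc_BC_AD: assumes "fBC k q Y" "fAD k q Y'" "q \<le> 1" "n1 - m1 \<le> k" "k + q \<le> n1" "k + q \<le> m2"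
    "a < b" "b < c" "c < d" "a \<in> Y" "c \<in> Y" "b \<in> Y'" "d \<in> Y'"
  shows False
  using assms bal unfolding fBC_def fAD_def by auto

lemma nc_BC_BC: assumes "fBC k q Y" "fBC k q Y'" "q \<le> 1" "n1 - m1 \<le> k" "k + q \<le> n1" "k + q \<le> m2"
    "a < b" "b < c" "c < d" "a \<in> Y" "c \<in> Y" "b \<in> Y'" "d \<in> Y'"
  shows False
  using assms bal unfolding fBC_def fBC_def by auto

lemma nc_BC_AB: assumes "fBC k q Y" "fAB k q Y'" "q \<le> 1" "n1 - m1 \<le> k" "k + q \<le> n1" "k + q \<le> m2"
    "a < b" "b < c" "c < d" "a \<in> Y" "c \<in> Y" "b \<in> Y'" "d \<in> Y'"
  shows False
  using assms bal unfolding fBC_def fAB_def by auto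

lemma nc_BC_CD: assumes "fBC k q Y" "fCD k q Y'" "q \<le> 1" "n1 - m1 \<le> k" "k + q \<le> n1" "k + q \<le> m2"
    "a < b" "b < c" "c < d" "a \<in> Y" "c \<in> Y" "b \<in> Y'" "d \<in> Y'"
  shows False
  using assms bal unfolding fBC_def fCD_def by auto

lemma nc_BC_FB: assumes "fBC k q Y" "fFB k q Y'" "q \<le> 1" "n1 - m1 \<le> k" "k + q \<le> n1" "k + q \<le> m2"
    "a < b" "b < c" "c < d" "a \<in> Y" "c \<in> Y" "b \<in> Y'" "d \<in> Y'"
  shows False
  using assms bal unfolding fBC_def fFB_def by auto

lemma nc_AB_AD: assumes "fAB k q Y" "fAD k q Y'" "q \<le> 1" "n1 - m1 \<le> k" "k + q \<le> n1" "k + q \<le> m2"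
    "a < b" "b < c" "c < d" "a \<in> Y" "c \<in> Y" "b \<in> Y'" "d \<in> Y'"
  shows False
  using assms bal unfolding fAB_def fAD_def by auto

lemma nc_AB_BC: assumes "fAB k q Y" "fBC k q Y'" "q \<le> 1" "n1 - m1 \<le> k" "k + q \<le> n1" "k + q \<le> m2"
    "a < b" "b < c" "c < d" "a \<in> Y" "c \<in> Y" "b \<in> Y'" "d \<in> Y'"
  shows False
  using assms bal unfolding fAB_def fBC_def by auto

lemma nc_AB_AB: assumes "fAB k q Y" "fAB k q Y'" "q \<le> 1" "n1 - m1 \<le> k" "k + q \<le> n1" "k + q \<le> m2"
    "a < b" "b < c" "c < d" "a \<in> Y" "c \<in> Y" "b \<in> Y'" "d \<in> Y'"
  shows False
  using assms bal unfolding fAB_def fAB_def by auto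

lemma nc_AB_CD: assumes "fAB k q Y" "fCD k q Y'" "q \<le> 1" "n1 - m1 \<le> k" "k + q \<le> n1" "k + q \<le> m2"
    "a < b" "b < c" "c < d" "a \<in> Y" "c \<in> Y" "b \<in> Y'" "d \<in> Y'"
  shows False
  using assms bal unfolding fAB_def fCD_def by auto

lemma nc_AB_FB: assumes "fAB k q Y" "fFB k q Y'" "q \<le> 1" "n1 - m1 \<le> k" "k + q \<le> n1" "k + q \<le> m2"
    "a < b" "b < c" "c < d" "a \<in> Y" "c \<in> Y" "b \<in> Y'" "d \<in> Y'"
  shows False
  using assms bal unfolding fAB_def fFB_def by auto

lemma nc_CD_AD: assumes "fCD k q Y" "fAD k q Y'" "q \<le> 1" "n1 - m1 \<le> k" "k + q \<le> n1" "k + q \<le> m2"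
    "a < b" "b < c" "c < d" "a \<in> Y" "c \<in> Y" "b \<in> Y'" "d \<in> Y'"
  shows False
  using assms bal unfolding fCD_def fAD_def by auto

lemma nc_CD_BC: assumes "fCD k q Y" "fBC k q Y'" "q \<le> 1" "n1 - m1 \<le> k" "k + q \<le> n1" "k + q \<le> m2"
    "a < b" "b < c" "c < d" "a \<in> Y" "c \<in> Y" "b \<in> Y'" "d \<in> Y'"
  shows False
  using assms bal unfolding fCD_def fBC_def by auto

lemma nc_CD_AB: assumes "fCD k q Y" "fAB k q Y'" "q \<le> 1" "n1 - m1 \<le> k" "k + q \<le> n1" "k + q \<le> m2"
    "a < b" "b < c" "c < d" "a \<in> Y" "c \<in> Y" "b \<in> Y'" "d \<in> Y'"
  shows False
  using assms bal unfolding fCD_def fAB_def by auto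

lemma nc_CD_CD: assumes "fCD k q Y" "fCD k q Y'" "q \<le> 1" "n1 - m1 \<le> k" "k + q \<le> n1" "k + q \<le> m2"
    "a < b" "b < c" "c < d" "a \<in> Y" "c \<in> Y" "b \<in> Y'" "d \<in> Y'"
  shows False
  using assms bal unfolding fCD_def fCD_def by auto

lemma nc_CD_FB: assumes "fCD k q Y" "fFB k q Y'" "q \<le> 1" "n1 - m1 \<le> k" "k + q \<le> n1" "k + q \<le> m2"
    "a < b" "b < c" "c < d" "a \<in> Y" "c \<in> Y" "b \<in> Y'" "d \<in> Y'"
  shows False
  using assms bal unfolding fCD_def fFB_def by auto

lemma nc_FB_AD: assumes "fFB k q Y" "fAD k q Y'" "q \<le> 1" "n1 - m1 \<le> k" "k + q \<le> n1" "k + q \<le> m2"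
    "a < b" "b < c" "c < d" "a \<in> Y" "c \<in> Y" "b \<in> Y'" "d \<in> Y'"
  shows False
  using assms bal unfolding fFB_def fAD_def by auto

lemma nc_FB_BC: assumes "fFB k q Y" "fBC k q Y'" "q \<le> 1" "n1 - m1 \<le> k" "k + q \<le> n1" "k + q \<le> m2"
    "a < b" "b < c" "c < d" "a \<in> Y" "c \<in> Y" "b \<in> Y'" "d \<in> Y'"
  shows False
  using assms bal unfolding fFB_def fBC_def by auto

lemma nc_FB_AB: assumes "fFB k q Y" "fAB k q Y'" "q \<le> 1" "n1 - m1 \<le> k" "k + q \<le> n1" "k + q \<le> m2"
    "a < b" "b < c" "c < d" "a \<in> Y" "c \<in> Y" "b \<in> Y'" "d \<in> Y'"
  shows False
  using assms bal unfolding fFB_def fAB_def by auto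

lemma nc_FB_CD: assumes "fFB k q Y" "fCD k q Y'" "q \<le> 1" "n1 - m1 \<le> k" "k + q \<le> n1" "k + q \<le> m2"
    "a < b" "b < c" "c < d" "a \<in> Y" "c \<in> Y" "b \<in> Y'" "d \<in> Y'"
  shows False
  using assms bal unfolding fFB_def fCD_def by auto

lemma nc_FB_FB: assumes "fFB k q Y" "fFB k q Y'" "Y \<noteq> Y'" shows False
  using assms unfolding fFB_def by auto

lemma Expl_nc:
  assumes P: "(k,q) \<in> Par" and Y: "Y \<in> Expl k q" and Y': "Y' \<in> Expl k q" and ne: "Y \<noteq> Y'"
    and abcd: "a < b" "b < c" "c < d" "a \<in> Y" "c \<in> Y" "b \<in> Y'" "d \<in> Y'"
  shows False
proof -
  have q: "q \<le> 1" "n1 - m1 \<le> k" "k + q \<le> n1" "k + q \<le> m2" using P by (auto simp: Par_def)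
  note C = Expl_cases[OF P Y] Expl_cases[OF P Y']
  from C(1) show False
  proof (elim disjE)
    assume h: "fAD k q Y"
    from C(2) show False
    proof (elim disjE)
      assume h': "fAD k q Y'"
      show False by (rule nc_AD_AD[OF h h' q abcd])
    next
      assume h': "fBC k q Y'"
      show False by (rule nc_AD_BC[OF h h' q abcd])
    next
      assume h': "fAB k q Y'"
      show False by (rule nc_AD_AB[OF h h' q abcd])
    next
      assume h': "fCD k q Y'"
      show False by (rule nc_AD_CD[OF h h' q abcd])
    next
      assume h': "fFB k q Y'"
      show False by (rule nc_AD_FB[OF h h' q abcd])
    qed
  next
    assume h: "fBC k q Y"
    from C(2) show False
    proof (elim disjE)
      assume h': "fAD k q Y'"
      show False by (rule nc_BC_AD[OF h h' q abcd])
    next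
      assume h': "fBC k q Y'"
      show False by (rule nc_BC_BC[OF h h' q abcd])
    next
      assume h': "fAB k q Y'"
      show False by (rule nc_BC_AB[OF h h' q abcd])
    next
      assume h': "fCD k q Y'"
      show False by (rule nc_BC_CD[OF h h' q abcd])
    next
      assume h': "fFB k q Y'"
      show False by (rule nc_BC_FB[OF h h' q abcd])
    qed
  next
    assume h: "fAB k q Y"
    from C(2) show False
    proof (elim disjE)
      assume h': "fAD k q Y'"
      show False by (rule nc_AB_AD[OF h h' q abcd])
    next
      assume h': "fBC k q Y'"
      show False by (rule nc_AB_BC[OF h h' q abcd])
    next
      assume h': "fAB k q Y'"
      show False by (rule nc_AB_AB[OF h h' q abcd])
    next
      assume h': "fCD k q Y'"
      show False by (rule nc_AB_CD[OF h h' q abcd])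
    next
      assume h': "fFB k q Y'"
      show False by (rule nc_AB_FB[OF h h' q abcd])
    qed
  next
    assume h: "fCD k q Y"
    from C(2) show False
    proof (elim disjE)
      assume h': "fAD k q Y'"
      show False by (rule nc_CD_AD[OF h h' q abcd])
    next
      assume h': "fBC k q Y'"
      show False by (rule nc_CD_BC[OF h h' q abcd])
    next
      assume h': "fAB k q Y'"
      show False by (rule nc_CD_AB[OF h h' q abcd])
    next
      assume h': "fCD k q Y'"
      show False by (rule nc_CD_CD[OF h h' q abcd])
    next
      assume h': "fFB k q Y'"
      show False by (rule nc_CD_FB[OF h h' q abcd])
    qed
  next
    assume h: "fFB k q Y"
    from C(2) show False
    proof (elim disjE)
      assume h': "fAD k q Y'"
      show False by (rule nc_FB_AD[OF h h' q abcd])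
    next
      assume h': "fBC k q Y'"
      show False by (rule nc_FB_BC[OF h h' q abcd])
    next
      assume h': "fAB k q Y'"
      show False by (rule nc_FB_AB[OF h h' q abcd])
    next
      assume h': "fCD k q Y'"
      show False by (rule nc_FB_CD[OF h h' q abcd])
    next
      assume h': "fFB k q Y'"
      show False by (rule nc_FB_FB[OF h h' ne])
    qed
  qed
qed

end

context W begin

lemma alt_lt:
  assumes "finite Y" "Y \<subseteq> {1..N}"
    and "\<And>x y. x\<in>Y \<Longrightarrow> y\<in>Y \<Longrightarrow> x<y \<Longrightarrow> (\<forall>z\<in>Y. \<not>(x<z \<and> z<y)) \<Longrightarrow> lt x \<noteq> lt y"
  shows "alternating_block s Y"
  unfolding alt_iff[OF assms(1)]
proof (intro ballI impI)
  fix x y assume "x \<in> Y" "y \<in> Y" "x < y" "\<forall>z\<in>Y. \<not> (x < z \<and> z < y)"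
  moreover have "1 \<le> x" "x \<le> N" "1 \<le> y" "y \<le> N" using assms(2) \<open>x\<in>Y\<close> \<open>y\<in>Y\<close> by auto
  ultimately show "s ! (x - 1) \<noteq> s ! (y - 1)" using assms(3) s_nth by metis
qed

lemma block_ok:
  assumes P: "(k,q) \<in> Par" and Y: "Y \<in> Expl k q"
  shows "alternating_block s Y \<and> (card Y = 2 \<or> (q = 1 \<and> card Y = 4))"
proof -
  have q: "q \<le> 1" "n1 - m1 \<le> k" "k + q \<le> n1" "k + q \<le> m2" using P by (auto simp: Par_def)
  have sub: "Y \<subseteq> {1..N}" using Expl_sub[OF P Y] .
  have fin: "finite Y" using sub finite_subset by blast
  from Expl_cases[OF P Y] show ?thesis
  proof (elim disjE)
    assume "fAD k q Y"
    then obtain j e where h: "Y = {j+1, e}" "e + j = N" "j<n1" "j<m2" "j<k" unfolding fAD_def by blast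
    have "alternating_block s Y" using fin sub
      by (rule alt_lt) (use h bal in \<open>auto simp: lt_def\<close>)
    moreover have "card Y = 2" using h by auto
    ultimately show ?thesis by simp
  next
    assume "fBC k q Y"
    then obtain j e where h: "Y = {j, e}" "j + e = 2*(n1+m1)+1" "n1<j" "j \<le> n1+m1" "2*n1 < j+k" "2*n1 < j+m2"
      unfolding fBC_def by blast
    have "alternating_block s Y" using fin sub
      by (rule alt_lt) (use h bal in \<open>auto simp: lt_def\<close>)
    moreover have "card Y = 2" using h by auto
    ultimately show ?thesis by simp
  next
    assume "fAB k q Y"
    then obtain j e where h: "Y = {j+1, e}" "e + j = 2*n1" "j<n1" "n1 \<le> j+m1" "k+q \<le> j" unfolding fAB_def by blast
    have "alternating_block s Y" using fin sub
      by (rule alt_lt) (use h bal in \<open>auto simp: lt_def\<close>)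
    moreover have "card Y = 2" using h by auto
    ultimately show ?thesis by simp
  next
    assume "fCD k q Y"
    then obtain j e where h: "Y = {j+1+2*m1, e}" "e + j = N" "j<m2" "n1 \<le> j+m1" "k+q \<le> j" unfolding fCD_def by blast
    have "alternating_block s Y" using fin sub
      by (rule alt_lt) (use h bal in \<open>auto simp: lt_def\<close>)
    moreover have "card Y = 2" using h bal by auto
    ultimately show ?thesis by simp
  next
    assume "fFB k q Y"
    then obtain e f where h: "Y = {k+1, e, k+1+2*m1, f}" "q = 1" "e + k = 2*n1" "f + k = N" unfolding fFB_def by blast
    have "alternating_block s Y" using fin sub
      by (rule alt_lt) (use h bal q in \<open>auto simp: lt_def\<close>)
    moreover have "card Y = 4"
    proof -
      have "k+1 < e" "e < k+1+2*m1" "k+1+2*m1 < f" using h q bal by auto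
      then show ?thesis using h by auto
    qed
    ultimately show ?thesis using h by simp
  qed
qed

lemma Expl_NC: assumes P: "(k,q) \<in> Par" shows "Expl k q \<in> NC s"
  unfolding NC_def
proof (intro CollectI conjI ballI)
  show "partition_on {1..length s} (Expl k q)" using Expl_part[OF P] length_s by simp
  show "noncrossing (Expl k q)" unfolding noncrossing_def using Expl_nc[OF P] by blast
  fix B assume B: "B \<in> Expl k q"
  have "card B = 2 \<or> card B = 4" using block_ok[OF P B] by auto
  then show "even (card B)" by auto
  show "alternating_block s B" using block_ok[OF P B] by auto
qed

lemma Expl_NC2: assumes P: "(k,0) \<in> Par" shows "Expl k 0 \<in> NC2 s"
  unfolding NC2_def using Expl_NC[OF P] block_ok[OF P] by auto

lemma FB_Expl_card: assumes P: "(k,q) \<in> Par" "q = 1" shows "FB k \<in> Expl k q" "card (FB k) = 4"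
proof -
  have q: "n1 - m1 \<le> k" "k + 1 \<le> n1" "k + 1 \<le> m2" using assms by (auto simp: Par_def)
  show "FB k \<in> Expl k q" using assms ExplI_FB by simp
  have "k+1 < 2*n1-k" "2*n1-k < k+1+2*m1" "k+1+2*m1 < N-k" using q bal by auto
  then show "card (FB k) = 4" by (auto simp add: FB_def)
qed

end

context W begin

lemma H_A: "k \<le> n1 \<Longrightarrow> H k = int k" by (simp add: H_def)
lemma H_B: "n1 \<le> k \<Longrightarrow> k \<le> n1+m1 \<Longrightarrow> H k = 2 * int n1 - int k" by (auto simp: H_def)
lemma H_C: "n1+m1 \<le> k \<Longrightarrow> k \<le> n1+m1+n2 \<Longrightarrow> H k = int k - 2 * int m1" by (auto simp: H_def)
lemma H_D: "n1+m1+n2 \<le> k \<Longrightarrow> H k = 2 * int n1 + 2 * int n2 - int k" using bal by (auto simp: H_def)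

lemma pair_form:
  assumes x: "1 \<le> x" "x < y" "y \<le> N" and l: "lt x \<noteq> lt y" and h: "H (y-1) = H x"
  shows "(\<exists>j. j<n1 \<and> j<m2 \<and> {x,y} = AD j) \<or>
         (\<exists>b. n1<b \<and> b \<le> n1+m1 \<and> 2*n1 < b+m2 \<and> {x,y} = BC b) \<or>
         (\<exists>j. j<n1 \<and> n1 \<le> j+m1 \<and> {x,y} = AB j) \<or>
         (\<exists>j. j<m2 \<and> n1 \<le> j+m1 \<and> {x,y} = CD j)"
proof -
  have yy: "int (y-1) = int y - 1" using x by simp
  consider "x \<le> n1" | "n1 < x \<and> x \<le> n1 + m1" | "n1 + m1 < x \<and> x \<le> n1 + m1 + n2" | "n1 + m1 + n2 < x"
    by linarith
  then show ?thesis
  proof cases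
    case 1
    then have "\<not> lt y" using l by (simp add: lt_def)
    then consider "n1 < y \<and> y \<le> n1 + m1" | "n1 + m1 + n2 < y" using 1 x by (auto simp: lt_def)
    then show ?thesis
    proof cases
      case a: 1
      have "H x = int x" using 1 by (simp add: H_def)
      moreover have "H (y-1) = 2 * int n1 - int (y-1)" using a by (intro H_B) auto
      ultimately have e: "x + y = 2*n1+1" using h a yy by linarith
      have "x - 1 < n1" "n1 \<le> (x-1) + m1" "{x,y} = AB (x-1)" using e a 1 x by (auto simp: AB_def)
      then show ?thesis by blast
    next
      case a: 2
      have "H x = int x" using 1 by (simp add: H_def)
      moreover have "H (y-1) = 2 * int n1 + 2 * int n2 - int (y-1)"
        using a by (intro H_D) auto
      ultimately have e: "x + y = 2*n1+2*n2+1" using h a yy by linarith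
      have "x - 1 < n1" "x - 1 < m2" "{x,y} = AD (x-1)" using e a 1 x bal by (auto simp: AD_def)
      then show ?thesis by blast
    qed
  next
    case 2
    then have "lt y" using l by (simp add: lt_def)
    then have a: "n1 + m1 < y \<and> y \<le> n1 + m1 + n2" using 2 x by (auto simp: lt_def)
    have "H x = 2 * int n1 - int x" using 2 by (simp add: H_def)
    moreover have "H (y-1) = int (y-1) - 2 * int m1" using a 2 by (intro H_C) auto
    ultimately have e: "x + y = 2*(n1+m1)+1" using h a yy by simp
    have "2*n1 < x+m2" "{x,y} = BC x" using e a 2 x bal by (auto simp: BC_def)
    then show ?thesis using 2 by blast
  next
    case 3
    then have "\<not> lt y" using l by (simp add: lt_def)
    then have a: "n1 + m1 + n2 < y" using 3 x by (auto simp: lt_def)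
    have "H x = int x - 2 * int m1" using 3 by (simp add: H_def)
    moreover have "H (y-1) = 2 * int n1 + 2 * int n2 - int (y-1)" using a by (intro H_D) auto
    ultimately have e: "x + y = 2*(n1+m1+n2)+1" using h a yy by simp
    have "N - y < m2" "n1 \<le> (N-y) + m1" "{x,y} = CD (N-y)" using e a 3 x bal by (auto simp: CD_def)
    then show ?thesis by blast
  next
    case 4
    then have False using l x by (auto simp: lt_def)
    then show ?thesis ..
  qed
qed

lemma quad_form:
  assumes r: "run a = 0" "run b = 1" "run c = 2" "run d = 3" and a1: "1 \<le> a" and dN: "d \<le> N"
    and h: "H (b-1) = H a" "H (c-1) = H b" "H (d-1) = H c"
  shows "\<exists>j. j<n1 \<and> j<m2 \<and> n1 \<le> j+m1 \<and> {a,b,c,d} = FB j"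
proof -
  have ra: "a \<le> n1" "n1 < b" "b \<le> n1+m1" "n1+m1 < c" "c \<le> n1+m1+n2" "n1+m1+n2 < d"
    using r by (auto simp: run_def split: if_splits)
  have yy: "int (b-1) = int b - 1" "int (c-1) = int c - 1" "int (d-1) = int d - 1" using ra by auto
  have "H a = int a" using ra by (simp add: H_def)
  moreover have "H (b-1) = 2 * int n1 - int (b-1)" using ra by (intro H_B) auto
  ultimately have e1: "a + b = 2*n1+1" using h ra yy by linarith
  have "H b = 2 * int n1 - int b" using ra by (intro H_B) auto
  moreover have "H (c-1) = int (c-1) - 2 * int m1" using ra by (intro H_C) auto
  ultimately have e2: "b + c = 2*(n1+m1)+1" using h ra yy by simp
  have "H c = int c - 2 * int m1" using ra by (intro H_C) auto
  moreover have "H (d-1) = 2 * int n1 + 2 * int n2 - int (d-1)" using ra by (intro H_D) auto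
  ultimately have e3: "c + d = 2*(n1+m1+n2)+1" using h ra yy by simp
  have "a - 1 < n1" "a - 1 < m2" "n1 \<le> (a-1)+m1" "{a,b,c,d} = FB (a-1)"
    using e1 e2 e3 ra a1 dN bal by (auto simp: FB_def)
  then show ?thesis by blast
qed

end


locale WP = W +
  fixes P :: "nat set set"
  assumes PNC: "P \<in> NC (word4 n1 m1 n2 m2)"
begin

lemma part: "partition_on {1..N} P" using PNC length_s by (simp add: NC_def)
lemma ncP: "noncrossing P" using PNC by (simp add: NC_def)
lemma blk: "Y \<in> P \<Longrightarrow> even (card Y) \<and> alternating_block s Y" using PNC by (simp add: NC_def)
lemma subP: "Y \<in> P \<Longrightarrow> Y \<subseteq> {1..N}" using partition_onD1[OF part] by blast
lemma finP: "Y \<in> P \<Longrightarrow> finite Y" using subP finite_subset by blast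
lemma neP: "Y \<in> P \<Longrightarrow> Y \<noteq> {}" using partition_onD3[OF part] by blast
lemma uniq: "Y \<in> P \<Longrightarrow> Z \<in> P \<Longrightarrow> x \<in> Y \<Longrightarrow> x \<in> Z \<Longrightarrow> Y = Z"
  using disjointD[OF partition_onD2[OF part]] by blast
lemma cover: "1 \<le> i \<Longrightarrow> i \<le> N \<Longrightarrow> \<exists>Y\<in>P. i \<in> Y"
  using partition_onD1[OF part] by auto

lemma ncP': assumes "B \<in> P" "B' \<in> P" "B \<noteq> B'" and h: "a < b" "b < c" "c < d"
   "a \<in> B" "c \<in> B" "b \<in> B'" "d \<in> B'" shows False
proof -
  from ncP have "\<forall>B\<in>P. \<forall>B'\<in>P. B \<noteq> B' \<longrightarrow> \<not> (\<exists>a b c d. a < b \<and> b < c \<and> c < d \<and> a \<in> B \<and> c \<in> B \<and> b \<in> B' \<and> d \<in> B')"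
    unfolding noncrossing_def .
  from this[rule_format, OF assms(1) assms(2) assms(3)]
  have n: "\<not> (\<exists>a b c d. a < b \<and> b < c \<and> c < d \<and> a \<in> B \<and> c \<in> B \<and> b \<in> B' \<and> d \<in> B')" .
  have "\<exists>a b c d. a < b \<and> b < c \<and> c < d \<and> a \<in> B \<and> c \<in> B \<and> b \<in> B' \<and> d \<in> B'"
    using h by (intro exI conjI)
  with n show False by contradiction
qed

lemma consalt:
  assumes Y: "Y \<in> P" and xy: "x \<in> Y" "y \<in> Y" "x < y" and nz: "\<forall>z\<in>Y. \<not> (x < z \<and> z < y)"
  shows "lt x \<noteq> lt y"
proof -
  have "s ! (x - 1) \<noteq> s ! (y - 1)" using blk[OF Y] alt_iff[OF finP[OF Y]] xy nz by blast
  moreover have "1 \<le> x" "x \<le> N" "1 \<le> y" "y \<le> N" using subP[OF Y] xy by auto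
  ultimately show ?thesis using s_nth by metis
qed

lemma onerun_aux:
  assumes Y: "Y \<in> P" and xy: "x \<in> Y" "y \<in> Y" "x < y" and r: "run x = run y"
  shows False
proof -
  define Z where "Z = {z\<in>Y. x < z}"
  have fin: "finite Z" using finP[OF Y] by (simp add: Z_def)
  have yZ: "y \<in> Z" using xy by (simp add: Z_def)
  define z0 where "z0 = Min Z"
  have z0Z: "z0 \<in> Z" using fin yZ Min_in z0_def by blast
  have z0y: "z0 \<le> y" using fin yZ z0_def by simp
  have z0: "z0 \<in> Y" "x < z0" using z0Z by (auto simp: Z_def)
  have nz: "\<forall>w\<in>Y. \<not> (x < w \<and> w < z0)"
  proof (intro ballI notI)
    fix w assume "w \<in> Y" "x < w \<and> w < z0"
    then have "w \<in> Z" by (simp add: Z_def)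
    then have "z0 \<le> w" using fin z0_def by simp
    then show False using \<open>x < w \<and> w < z0\<close> by simp
  qed
  have "run x \<le> run z0" "run z0 \<le> run y" using z0 z0y run_mono by auto
  then have "run z0 = run x" using r by simp
  then have "lt z0 = lt x" by (simp add: lt_run)
  then show False using consalt[OF Y xy(1) z0(1) z0(2) nz] by simp
qed

lemma onerun: "Y \<in> P \<Longrightarrow> x \<in> Y \<Longrightarrow> y \<in> Y \<Longrightarrow> run x = run y \<Longrightarrow> x = y"
  using onerun_aux by (metis linorder_neqE_nat)

lemma preform:
  assumes Y: "Y \<in> P"
  shows "(\<exists>x y. Y = {x,y} \<and> x < y \<and> lt x \<noteq> lt y) \<or>
         (\<exists>a b c d. Y = {a,b,c,d} \<and> run a = 0 \<and> run b = 1 \<and> run c = 2 \<and> run d = 3)"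
proof -
  have fin: "finite Y" using finP[OF Y] .
  have inj: "inj_on run Y" using onerun[OF Y] by (auto simp: inj_on_def)
  have cY: "card (run ` Y) = card Y" using card_image[OF inj] .
  have run_in: "run x \<in> {0,1,2,3}" for x by (simp add: run_def)
  have sub4: "run ` Y \<subseteq> {0,1,2,3}" using run_in by (intro image_subsetI) blast
  have c4: "card (run ` Y) \<le> 4" using card_mono[OF _ sub4] by simp
  have c0: "card Y \<noteq> 0" using fin neP[OF Y] by simp
  have ev: "even (card Y)" using blk[OF Y] by simp
  have "card Y = 2 \<or> card Y = 4"
  proof -
    have "card Y \<le> 4" using c4 cY by simp
    then have "card Y \<in> {0,1,2,3,4}" by auto
    then show ?thesis using c0 ev by auto
  qed
  then show ?thesis
  proof
    assume "card Y = 2"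
    then obtain x y where xy: "Y = {x,y}" "x \<noteq> y" by (auto simp: card_2_iff)
    show ?thesis
    proof (cases "x < y")
      case True
      have "lt x \<noteq> lt y" using consalt[OF Y, of x y] xy True by auto
      then show ?thesis using xy True by blast
    next
      case False
      then have "y < x" using xy by simp
      have "lt y \<noteq> lt x" using consalt[OF Y, of y x] xy \<open>y < x\<close> by auto
      then show ?thesis using xy \<open>y < x\<close> by (metis insert_commute)
    qed
  next
    assume "card Y = 4"
    then have "card (run ` Y) = card {0::nat,1,2,3}" using cY by simp
    then have R: "run ` Y = {0,1,2,3}" using card_subset_eq[OF _ sub4] by simp
    obtain a where a: "a \<in> Y" "run a = 0" using R by (metis imageE insertI1)
    obtain b where b: "b \<in> Y" "run b = 1" using R by (metis imageE insert_iff)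
    obtain c where c: "c \<in> Y" "run c = 2" using R by (metis imageE insert_iff)
    obtain d where d: "d \<in> Y" "run d = 3" using R by (metis imageE insert_iff)
    have "Y = {a,b,c,d}"
    proof
      show "{a,b,c,d} \<subseteq> Y" using a b c d by auto
      show "Y \<subseteq> {a,b,c,d}"
      proof
        fix w assume w: "w \<in> Y"
        then have "run w \<in> {0,1,2,3}" using R by blast
        then show "w \<in> {a,b,c,d}" using onerun[OF Y w] a b c d by auto
      qed
    qed
    then show ?thesis using a b c d by blast
  qed
qed

lemma blockbal: assumes Y: "Y \<in> P" shows "sum sg Y = 0"
  using preform[OF Y]
proof (elim disjE exE conjE)
  fix x y assume "Y = {x,y}" "x < y" "lt x \<noteq> lt y"
  then show ?thesis by (auto simp: sg_def)
next
  fix a b c d assume h: "Y = {a,b,c,d}" "run a = 0" "run b = 1" "run c = 2" "run d = 3"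
  then have "a \<noteq> b" "a \<noteq> c" "a \<noteq> d" "b \<noteq> c" "b \<noteq> d" "c \<noteq> d" by auto
  moreover have "lt a" "\<not> lt b" "lt c" "\<not> lt d" using h by (auto simp: lt_run)
  ultimately show ?thesis using h by (simp add: sg_def)
qed

lemma gapbal:
  assumes Y: "Y \<in> P" and xy: "x \<in> Y" "y \<in> Y" "x < y" and nz: "\<forall>z\<in>Y. \<not> (x < z \<and> z < y)"
  shows "H (y - 1) = H x"
proof -
  define I where "I = {x<..<y}"
  define Q where "Q = {Z\<in>P. Z \<subseteq> I}"
  have bnd: "1 \<le> x" "y \<le> N" using subP[OF Y] xy by auto
  have IQ: "I = \<Union>Q"
  proof
    show "\<Union>Q \<subseteq> I" by (auto simp: Q_def)
    show "I \<subseteq> \<Union>Q"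
    proof
      fix i assume i: "i \<in> I"
      then have "1 \<le> i" "i \<le> N" using bnd by (auto simp: I_def)
      then obtain Z where Z: "Z \<in> P" "i \<in> Z" using cover by blast
      have iY: "i \<notin> Y" using nz i by (auto simp: I_def)
      have ZY: "Z \<noteq> Y" using Z iY by blast
      have "Z \<subseteq> I"
      proof
        fix w assume w: "w \<in> Z"
        show "w \<in> I"
        proof (rule ccontr)
          assume wI: "w \<notin> I"
          have "w \<noteq> x" using uniq[OF Y Z(1) xy(1)] ZY w by blast
          moreover have "w \<noteq> y" using uniq[OF Y Z(1) xy(2)] ZY w by blast
          ultimately have "w < x \<or> y < w" using wI by (auto simp: I_def)
          then show False
          proof
            assume "w < x"
            moreover have "x < i" "i < y" using i by (auto simp: I_def)
            ultimately show False using ncP'[OF Z(1) Y ZY _ _ _ w Z(2) xy(1) xy(2)] by blast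
          next
            assume "y < w"
            moreover have "x < i" "i < y" using i by (auto simp: I_def)
            ultimately show False using ncP'[OF Y Z(1) ZY[symmetric] _ _ _ xy(1) xy(2) Z(2) w] by blast
          qed
        qed
      qed
      then show "i \<in> \<Union>Q" using Z by (auto simp: Q_def)
    qed
  qed
  have f1: "\<forall>A\<in>Q. finite A" using finP by (auto simp: Q_def)
  have f2: "\<forall>A\<in>Q. \<forall>B\<in>Q. A \<noteq> B \<longrightarrow> A \<inter> B = {}"
    using uniq unfolding Q_def by blast
  have "sum sg I = sum (sum sg) Q"
    unfolding IQ using sum.Union_disjoint[OF f1 f2] by simp
  also have "\<dots> = 0" by (rule sum.neutral) (auto simp: Q_def blockbal)
  finally have "sum sg I = 0" .
  then show ?thesis using gap_sum[OF xy(3) bnd(2)] by (simp add: I_def)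
qed

lemma form:
  assumes Y: "Y \<in> P"
  shows "(\<exists>j. j<n1 \<and> j<m2 \<and> Y = AD j) \<or>
         (\<exists>b. n1<b \<and> b \<le> n1+m1 \<and> 2*n1 < b+m2 \<and> Y = BC b) \<or>
         (\<exists>j. j<n1 \<and> n1 \<le> j+m1 \<and> Y = AB j) \<or>
         (\<exists>j. j<m2 \<and> n1 \<le> j+m1 \<and> Y = CD j) \<or>
         (\<exists>j. j<n1 \<and> j<m2 \<and> n1 \<le> j+m1 \<and> Y = FB j)"
  using preform[OF Y]
proof (elim disjE exE conjE)
  fix x y assume h: "Y = {x,y}" "x < y" "lt x \<noteq> lt y"
  have bnd: "1 \<le> x" "y \<le> N" using subP[OF Y] h by auto
  have "H (y-1) = H x" using gapbal[OF Y, of x y] h by auto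
  from pair_form[OF bnd(1) h(2) bnd(2) h(3) this] show ?thesis using h(1) by blast
next
  fix a b c d assume h: "Y = {a,b,c,d}" "run a = 0" "run b = 1" "run c = 2" "run d = 3"
  have ra: "a \<le> n1" "n1 < b" "b \<le> n1+m1" "n1+m1 < c" "c \<le> n1+m1+n2" "n1+m1+n2 < d"
    using h by (auto simp: run_def split: if_splits)
  then have o: "a < b" "b < c" "c < d" by auto
  have bnd: "1 \<le> a" "d \<le> N" using subP[OF Y] h by auto
  have "H (b-1) = H a" using gapbal[OF Y, of a b] h o by auto
  moreover have "H (c-1) = H b" using gapbal[OF Y, of b c] h o by auto
  moreover have "H (d-1) = H c" using gapbal[OF Y, of c d] h o by auto
  ultimately show ?thesis using quad_form[OF h(2-5) bnd] h(1) by blast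
qed

end


lemma part_eq:
  assumes "partition_on A P" "partition_on A Q" "P \<subseteq> Q" shows "P = Q"
proof
  show "P \<subseteq> Q" by fact
  show "Q \<subseteq> P"
  proof
    fix Z assume Z: "Z \<in> Q"
    have "Z \<noteq> {}" using partition_onD3[OF assms(2)] Z by auto
    then obtain z where z: "z \<in> Z" by blast
    then have "z \<in> A" using partition_onD1[OF assms(2)] Z by blast
    then obtain Y where Y: "Y \<in> P" "z \<in> Y" using partition_onD1[OF assms(1)] by blast
    then have "Y \<in> Q" using assms(3) by blast
    then have "Y = Z" using disjointD[OF partition_onD2[OF assms(2)]] Y Z z by blast
    then show "Z \<in> P" using Y by simp
  qed
qed

context WP begin

lemma ablock:
  assumes j: "j < n1" and Y: "Y \<in> P" "j + 1 \<in> Y"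
  shows "(Y = AD j \<and> j < m2) \<or> (Y = AB j \<and> n1 \<le> j + m1) \<or> (Y = FB j \<and> j < m2 \<and> n1 \<le> j + m1)"
  using form[OF Y(1)]
proof (elim disjE exE conjE)
  fix j' assume h: "j' < n1" "j' < m2" "Y = AD j'"
  then have "j' = j" using Y j bal by (auto simp: AD_def)
  then show ?thesis using h by simp
next
  fix b assume h: "n1 < b" "b \<le> n1 + m1" "2 * n1 < b + m2" "Y = BC b"
  then show ?thesis using Y j bal by (auto simp: BC_def)
next
  fix j' assume h: "j' < n1" "n1 \<le> j' + m1" "Y = AB j'"
  then have "j' = j" using Y j bal by (auto simp: AB_def)
  then show ?thesis using h by simp
next
  fix j' assume h: "j' < m2" "n1 \<le> j' + m1" "Y = CD j'"
  then show ?thesis using Y j bal by (auto simp: CD_def)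
next
  fix j' assume h: "j' < n1" "j' < m2" "n1 \<le> j' + m1" "Y = FB j'"
  then have "j' = j" using Y j bal by (auto simp: FB_def)
  then show ?thesis using h by simp
qed

lemma lvl:
  assumes "j < n1" "j < m2" "n1 \<le> j + m1"
  shows "AD j \<in> P \<or> AB j \<in> P \<or> FB j \<in> P"
proof -
  obtain Y where Y: "Y \<in> P" "j + 1 \<in> Y" using cover[of "j+1"] assms by auto
  show ?thesis using ablock[OF assms(1) Y] Y by auto
qed

lemma excl_AD_AB: "AD j \<in> P \<Longrightarrow> AB j \<in> P \<Longrightarrow> j < m2 \<Longrightarrow> n1 \<le> j + m1 \<Longrightarrow> False"
proof -
  assume a: "AD j \<in> P" "AB j \<in> P" "j < m2" "n1 \<le> j + m1"
  have "AD j = AB j" using uniq[OF a(1) a(2), of "j+1"] by (simp add: AD_def AB_def)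
  moreover have "N - j \<in> AD j" "N - j \<notin> AB j" using a bal by (auto simp: AD_def AB_def)
  ultimately show False by simp
qed

lemma excl_AD_FB: "AD j \<in> P \<Longrightarrow> FB j \<in> P \<Longrightarrow> j < m2 \<Longrightarrow> n1 \<le> j + m1 \<Longrightarrow> j < n1 \<Longrightarrow> False"
proof -
  assume a: "AD j \<in> P" "FB j \<in> P" "j < m2" "n1 \<le> j + m1" "j < n1"
  have "AD j = FB j" using uniq[OF a(1) a(2), of "j+1"] by (simp add: AD_def FB_def)
  moreover have "2*n1 - j \<in> FB j" "2*n1 - j \<notin> AD j" using a bal by (auto simp: AD_def FB_def)
  ultimately show False by simp
qed

lemma excl_AB_FB: "AB j \<in> P \<Longrightarrow> FB j \<in> P \<Longrightarrow> j < m2 \<Longrightarrow> n1 \<le> j + m1 \<Longrightarrow> j < n1 \<Longrightarrow> False"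
proof -
  assume a: "AB j \<in> P" "FB j \<in> P" "j < m2" "n1 \<le> j + m1" "j < n1"
  have "AB j = FB j" using uniq[OF a(1) a(2), of "j+1"] by (simp add: AB_def FB_def)
  moreover have "N - j \<in> FB j" "N - j \<notin> AB j" using a bal by (auto simp: AB_def FB_def)
  ultimately show False by simp
qed

lemma cross:
  assumes X: "X \<in> P" "j + 1 \<in> X" "2*n1 - j \<in> X" and X': "X' \<in> P" "j' + 1 \<in> X'" "N - j' \<in> X'"
    and jj: "j < j'" "j' < n1" "j' < m2" "n1 \<le> j + m1"
  shows False
proof -
  have "X \<noteq> X'"
  proof
    assume "X = X'"
    then have "j + 1 = j' + 1" using onerun[OF X(1) X(2), of "j'+1"] X' jj by (auto simp: run_def)
    then show False using jj by simp
  qed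
  moreover have "j + 1 < j' + 1" "j' + 1 < 2*n1 - j" "2*n1 - j < N - j'" using jj bal by auto
  ultimately show False using ncP'[OF X(1) X'(1)] X X' by blast
qed

definition Sk :: "nat set" where
  "Sk = {j. n1 - m1 \<le> j \<and> j < min n1 m2 \<and> AD j \<notin> P}"

definition kP :: nat where
  "kP = (if Sk = {} then min n1 m2 else Min Sk)"

lemma finSk: "finite Sk" by (rule finite_subset[of _ "{..<min n1 m2}"]) (auto simp: Sk_def)

definition qP :: nat where
  "qP = (if kP < min n1 m2 \<and> FB kP \<in> P then 1 else 0)"

lemma K1: "n1 - m1 \<le> kP \<and> kP \<le> min n1 m2"
proof (cases "Sk = {}")
  case True then show ?thesis using bal by (simp add: kP_def)
next
  case False
  then have "Min Sk \<in> Sk" using finSk Min_in by blast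
  then have "n1 - m1 \<le> Min Sk" "Min Sk < min n1 m2" by (auto simp: Sk_def)
  then show ?thesis using False by (simp add: kP_def)
qed

lemma K2: "n1 - m1 \<le> j \<Longrightarrow> j < kP \<Longrightarrow> AD j \<in> P"
proof (rule ccontr)
  assume a: "n1 - m1 \<le> j" "j < kP" "AD j \<notin> P"
  have "j < min n1 m2" using a K1 by simp
  then have jS: "j \<in> Sk" using a by (simp add: Sk_def)
  then have "Min Sk \<le> j" using finSk by simp
  moreover have "kP = Min Sk" using jS by (auto simp: kP_def)
  ultimately show False using a by simp
qed

lemma Kk: "kP < min n1 m2 \<Longrightarrow> AD kP \<notin> P"
proof -
  assume a: "kP < min n1 m2"
  have ne: "Sk \<noteq> {}"
  proof
    assume "Sk = {}" then have "kP = min n1 m2" by (simp add: kP_def)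
    then show False using a by simp
  qed
  then have "Min Sk \<in> Sk" using finSk Min_in by blast
  then have "AD (Min Sk) \<notin> P" by (simp add: Sk_def)
  then show ?thesis using ne by (simp add: kP_def)
qed

lemma Kk2: "kP < min n1 m2 \<Longrightarrow> AB kP \<in> P \<or> FB kP \<in> P"
  using Kk lvl[of kP] K1 by auto

lemma K3: "kP \<le> j \<Longrightarrow> j < min n1 m2 \<Longrightarrow> AD j \<notin> P"
proof
  assume a: "kP \<le> j" "j < min n1 m2" "AD j \<in> P"
  have k: "kP < min n1 m2" "n1 - m1 \<le> kP" using a K1 by auto
  show False
  proof (cases "j = kP")
    case True then show False using Kk k a by simp
  next
    case False
    then have jk: "kP < j" using a by simp
    have j': "j + 1 \<in> AD j" "N - j \<in> AD j" by (auto simp: AD_def)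
    from Kk2[OF k(1)] show False
    proof
      assume X: "AB kP \<in> P"
      have x1: "kP + 1 \<in> AB kP" "2*n1 - kP \<in> AB kP" by (auto simp: AB_def)
      have km: "n1 \<le> kP + m1" using k by arith
      show False using cross[OF X x1 a(3) j'] jk a km by auto
    next
      assume X: "FB kP \<in> P"
      have x1: "kP + 1 \<in> FB kP" "2*n1 - kP \<in> FB kP" by (auto simp: FB_def)
      have km: "n1 \<le> kP + m1" using k by arith
      show False using cross[OF X x1 a(3) j'] jk a km by auto
    qed
  qed
qed

lemma K4: "kP + qP \<le> j \<Longrightarrow> j < min n1 m2 \<Longrightarrow> AB j \<in> P"
proof -
  assume a: "kP + qP \<le> j" "j < min n1 m2"
  have k: "n1 - m1 \<le> kP" using K1 by auto
  have j: "j < n1" "j < m2" "n1 \<le> j + m1" using a k by auto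
  have "AD j \<notin> P" using K3 a by simp
  then have "AB j \<in> P \<or> FB j \<in> P" using lvl[OF j] by simp
  then show ?thesis
  proof
    assume F: "FB j \<in> P"
    show ?thesis
    proof (cases "j = kP")
      case True
      then have "qP = 1" using F a by (simp add: qP_def)
      then show ?thesis using a True by simp
    next
      case False
      then have jk: "kP < j" using a by simp
      then have kh: "kP < min n1 m2" using a by simp
      have j': "j + 1 \<in> FB j" "N - j \<in> FB j" by (auto simp: FB_def)
      from Kk2[OF kh] show ?thesis
      proof
        assume X: "AB kP \<in> P"
        have x1: "kP + 1 \<in> AB kP" "2*n1 - kP \<in> AB kP" by (auto simp: AB_def)
        have km: "n1 \<le> kP + m1" using k by arith
        show ?thesis using cross[OF X x1 F j'] jk j km by auto
      next
        assume X: "FB kP \<in> P"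
        have x1: "kP + 1 \<in> FB kP" "2*n1 - kP \<in> FB kP" by (auto simp: FB_def)
        have km: "n1 \<le> kP + m1" using k by arith
        show ?thesis using cross[OF X x1 F j'] jk j km by auto
      qed
    qed
  qed
qed

lemma ABpos: assumes "AB j \<in> P" "j < n1" "n1 \<le> j + m1" shows "kP + qP \<le> j"
proof (rule ccontr)
  assume c: "\<not> kP + qP \<le> j"
  have k: "n1 - m1 \<le> kP" "kP \<le> min n1 m2" using K1 by auto
  have jlo: "n1 - m1 \<le> j" using assms by simp
  show False
  proof (cases "j < kP")
    case True
    then have A: "AD j \<in> P" using K2 jlo by simp
    have "j < m2" using True k by simp
    then show False using excl_AD_AB[OF A assms(1)] assms by simp
  next
    case False
    then have "j = kP" "qP = 1" using c by (auto simp: qP_def split: if_splits)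
    then have "FB kP \<in> P" "kP < min n1 m2" by (auto simp: qP_def split: if_splits)
    then show False using excl_AB_FB assms \<open>j = kP\<close> by auto
  qed
qed

lemma Par_kq: "(kP, qP) \<in> Par"
  using K1 by (auto simp: Par_def qP_def)

lemma P_sub: "P \<subseteq> Expl kP qP"
proof
  fix Y assume Y: "Y \<in> P"
  have k: "n1 - m1 \<le> kP" "kP \<le> min n1 m2" using K1 by auto
  have kq: "kP + qP \<le> min n1 m2" using Par_kq by (simp add: Par_def)
  from form[OF Y] show "Y \<in> Expl kP qP"
  proof (elim disjE exE conjE)
    fix j assume h: "j < n1" "j < m2" "Y = AD j"
    have "j < kP"
    proof (rule ccontr)
      assume "\<not> j < kP"
      then have "AD j \<notin> P" using K3 h by simp
      then show False using Y h by simp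
    qed
    then show ?thesis using h ExplI_AD by simp
  next
    fix b assume h: "n1 < b" "b \<le> n1 + m1" "2 * n1 < b + m2" "Y = BC b"
    have "2 * n1 < b + kP"
    proof (rule ccontr)
      assume c: "\<not> 2 * n1 < b + kP"
      define j where "j = 2*n1 - b"
      have j: "kP \<le> j" "j < n1" "j < m2" "n1 \<le> j + m1" "2*n1 - j = b" using c h by (auto simp: j_def)
      have bY: "b \<in> Y" using h by (simp add: BC_def)
      have cY: "2*(n1+m1)+1-b \<in> Y" using h by (simp add: BC_def)
      have "AD j \<notin> P" using K3 j by simp
      then have "AB j \<in> P \<or> FB j \<in> P" using lvl j by blast
      then show False
      proof
        assume X: "AB j \<in> P"
        have "b \<in> AB j" using j by (simp add: AB_def)
        then have "AB j = Y" using uniq[OF X Y _ bY] by simp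
        moreover have "2*(n1+m1)+1-b \<notin> AB j" using h j by (auto simp: AB_def)
        ultimately show False using cY by simp
      next
        assume X: "FB j \<in> P"
        have "b \<in> FB j" using j by (simp add: FB_def)
        then have "FB j = Y" using uniq[OF X Y _ bY] by simp
        moreover have "j + 1 \<in> FB j" by (simp add: FB_def)
        moreover have "j + 1 \<notin> Y" using h j by (auto simp: BC_def)
        ultimately show False by simp
      qed
    qed
    then show ?thesis using h ExplI_BC by simp
  next
    fix j assume h: "j < n1" "n1 \<le> j + m1" "Y = AB j"
    then show ?thesis using ABpos[of j] Y ExplI_AB by simp
  next
    fix j assume h: "j < m2" "n1 \<le> j + m1" "Y = CD j"
    have "kP + qP \<le> j"
    proof (cases "j < min n1 m2")
      case False then show ?thesis using kq h by simp
    next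
      case True
      then have j: "j < n1" "j < m2" "n1 \<le> j + m1" using h by auto
      have dY: "N - j \<in> Y" using h by (simp add: CD_def)
      have "j+1 \<noteq> j+1+2*m1" using m1 by simp
      moreover have "j+1 \<noteq> N - j"
      proof -
        have "n1 < m1 + n2 + m2" using bal n2 by linarith
        then show ?thesis using j(1) by linarith
      qed
      ultimately
      have nY: "j + 1 \<notin> Y" using h by (simp add: CD_def)
      have "\<not> AD j \<in> P"
      proof
        assume X: "AD j \<in> P"
        have "N - j \<in> AD j" "j + 1 \<in> AD j" by (auto simp: AD_def)
        then show False using uniq[OF X Y _ dY] nY by auto
      qed
      moreover have "\<not> FB j \<in> P"
      proof
        assume X: "FB j \<in> P"
        have "N - j \<in> FB j" "j + 1 \<in> FB j" by (auto simp: FB_def)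
        then show False using uniq[OF X Y _ dY] nY by auto
      qed
      ultimately have "AB j \<in> P" using lvl[OF j] by simp
      then show ?thesis using ABpos j by simp
    qed
    then show ?thesis using h ExplI_CD by simp
  next
    fix j assume h: "j < n1" "j < m2" "n1 \<le> j + m1" "Y = FB j"
    have YF: "FB j \<in> P" using h Y by simp
    have nA: "AD j \<notin> P"
    proof
      assume "AD j \<in> P" then show False using excl_AD_FB[OF _ YF] h by simp
    qed
    have lo: "n1 - m1 \<le> j" using h by arith
    have "kP \<le> j"
    proof (rule ccontr)
      assume "\<not> kP \<le> j"
      then have "AD j \<in> P" using K2[OF lo] by simp
      then show False using nA by simp
    qed
    have "\<not> kP + qP \<le> j"
    proof
      assume "kP + qP \<le> j"
      then have "AB j \<in> P" using K4 h by simp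
      then show False using excl_AB_FB[OF _ YF] h by simp
    qed
    then have "qP = 1" "j = kP" using \<open>kP \<le> j\<close> by (auto simp: qP_def split: if_splits)
    then show ?thesis using h ExplI_FB by simp
  qed
qed

lemma P_eq: "P = Expl kP qP"
  using part_eq[OF part Expl_part[OF Par_kq] P_sub] .

end

context W begin

lemma NC_sub: assumes "P \<in> NC s" shows "\<exists>k q. (k,q) \<in> Par \<and> P = Expl k q"
proof -
  interpret p: WP n1 m1 n2 m2 P by unfold_locales (rule assms)
  show ?thesis using p.P_eq p.Par_kq by blast
qed

lemma AD_in_Expl:
  assumes P: "(k,q) \<in> Par" and j: "n1 - m1 \<le> j" "j < min n1 m2"
  shows "AD j \<in> Expl k q \<longleftrightarrow> j < k"
proof
  assume A: "AD j \<in> Expl k q"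
  have q: "q \<le> 1" "n1 - m1 \<le> k" "k + q \<le> n1" "k + q \<le> m2" using P by (auto simp: Par_def)
  have b: "blockof k q (j+1) = AD j" using E2[OF P A] by (simp add: AD_def)
  show "j < k"
  proof (rule ccontr)
    assume c: "\<not> j < k"
    have jn: "j + 1 \<le> n1" using j by simp
    show False
    proof (cases "j = k \<and> q = 1")
      case True
      then have "blockof k q (j+1) = FB k" using jn by (simp add: blockof_def)
      then have "AD j = FB k" using b by simp
      moreover have "2*n1 - k \<in> FB k" by (simp add: FB_def)
      moreover have "2*n1 - k \<notin> AD j" using True j bal by (auto simp: AD_def)
      ultimately show False by simp
    next
      case False
      then have "blockof k q (j+1) = AB j" using jn c by (auto simp: blockof_def)
      then have "AD j = AB j" using b by simp
      moreover have "N - j \<in> AD j" by (simp add: AD_def)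
      moreover have "N - j \<notin> AB j" using j bal by (auto simp: AB_def)
      ultimately show False by simp
    qed
  qed
next
  assume "j < k" then show "AD j \<in> Expl k q" using j by (intro ExplI_AD) auto
qed

lemma Expl_inj: "inj_on (\<lambda>(k,q). Expl k q) Par"
proof (rule inj_onI, clarify)
  fix k q k' q' assume P: "(k,q) \<in> Par" and P': "(k',q') \<in> Par" and e: "Expl k q = Expl k' q'"
  have q: "q \<le> 1" "n1 - m1 \<le> k" "k + q \<le> min n1 m2" using P by (auto simp: Par_def)
  have q': "q' \<le> 1" "n1 - m1 \<le> k'" "k' + q' \<le> min n1 m2" using P' by (auto simp: Par_def)
  have kk: "k = k'"
  proof (rule ccontr)
    assume "k \<noteq> k'"
    then consider "k < k'" | "k' < k" by linarith
    then show False
    proof cases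
      case 1
      have "AD k \<in> Expl k' q'" using AD_in_Expl[OF P', of k] 1 q q' by simp
      then have "AD k \<in> Expl k q" using e by simp
      then show False using AD_in_Expl[OF P, of k] 1 q q' by simp
    next
      case 2
      have "AD k' \<in> Expl k q" using AD_in_Expl[OF P, of k'] 2 q q' by simp
      then have "AD k' \<in> Expl k' q'" using e by simp
      then show False using AD_in_Expl[OF P', of k'] 2 q q' by simp
    qed
  qed
  have "q = q'"
  proof (rule ccontr)
    assume ne: "q \<noteq> q'"
    have gen: False if A: "(k,1) \<in> Par" "(k,0) \<in> Par" "Expl k 1 = Expl k 0" for k
    proof -
      have "FB k \<in> Expl k 0" "card (FB k) = 4" using FB_Expl_card[OF A(1)] A(3) by auto
      then show False using block_ok[OF A(2)] by fastforce
    qed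
    show False
    proof (cases "q = 1")
      case True
      then have "q' = 0" using ne q' by simp
      then show False using gen[of k] P P' e kk True by simp
    next
      case False
      then have "q = 0" "q' = 1" using ne q q' by auto
      then show False using gen[of k] P P' e kk by simp
    qed
  qed
  then show "k = k' \<and> q = q'" using kk by simp
qed

lemma NC_eq: "NC s = (\<lambda>(k,q). Expl k q) ` Par"
proof
  show "NC s \<subseteq> (\<lambda>(k,q). Expl k q) ` Par"
  proof
    fix P assume "P \<in> NC s"
    then obtain k q where "(k,q) \<in> Par" "P = Expl k q" using NC_sub by blast
    then show "P \<in> (\<lambda>(k,q). Expl k q) ` Par" by force
  qed
  show "(\<lambda>(k,q). Expl k q) ` Par \<subseteq> NC s" using Expl_NC by auto
qed

definition Par0 where "Par0 = {(k,q). (k,q) \<in> Par \<and> q = 0}"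

lemma NC2_eq: "NC2 s = (\<lambda>(k,q). Expl k q) ` Par0"
proof
  show "NC2 s \<subseteq> (\<lambda>(k,q). Expl k q) ` Par0"
  proof
    fix P assume P2: "P \<in> NC2 s"
    then have "P \<in> NC s" by (simp add: NC2_def)
    then obtain k q where kq: "(k,q) \<in> Par" "P = Expl k q" using NC_sub by blast
    have "q = 0"
    proof (rule ccontr)
      assume "q \<noteq> 0"
      then have "q = 1" using kq by (auto simp: Par_def)
      then have "FB k \<in> P" "card (FB k) = 4" using FB_Expl_card[OF kq(1)] kq by auto
      then show False using P2 by (auto simp: NC2_def)
    qed
    then show "P \<in> (\<lambda>(k,q). Expl k q) ` Par0" using kq by (force simp: Par0_def)
  qed
  show "(\<lambda>(k,q). Expl k q) ` Par0 \<subseteq> NC2 s" using Expl_NC2 by (auto simp: Par0_def)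
qed

lemma Par_split: "Par = (\<lambda>k. (k,0)) ` {n1 - m1..min n1 m2} \<union> (\<lambda>k. (k,1)) ` {n1 - m1..<min n1 m2}"
  by (auto simp: Par_def image_iff le_Suc_eq)

lemma Par0_eq: "Par0 = (\<lambda>k. (k,0)) ` {n1 - m1..min n1 m2}"
  by (auto simp: Par0_def Par_def)

lemma lohi: "n1 - m1 \<le> min n1 m2" using bal by auto

lemma card_Par: "card Par = 2 * (min n1 m2 - (n1 - m1)) + 1"
proof -
  have d: "(\<lambda>k. (k,0::nat)) ` {n1 - m1..min n1 m2} \<inter> (\<lambda>k. (k,1)) ` {n1 - m1..<min n1 m2} = {}" by auto
  have "card Par = card ((\<lambda>k. (k,0::nat)) ` {n1 - m1..min n1 m2}) + card ((\<lambda>k. (k,1::nat)) ` {n1 - m1..<min n1 m2})"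
    unfolding Par_split by (rule card_Un_disjoint) (use d in auto)
  also have "\<dots> = card {n1 - m1..min n1 m2} + card {n1 - m1..<min n1 m2}"
    by (simp add: card_image inj_on_def)
  also have "\<dots> = 2 * (min n1 m2 - (n1 - m1)) + 1" using lohi by simp
  finally show ?thesis .
qed

lemma card_Par0: "card Par0 = (min n1 m2 - (n1 - m1)) + 1"
proof -
  have "card Par0 = card {n1 - m1..min n1 m2}" unfolding Par0_eq by (simp add: card_image inj_on_def)
  then show ?thesis using lohi by (simp add: Suc_diff_le)
qed

lemma mu: "min n1 m2 - (n1 - m1) = min n1 (min m1 (min n2 m2))"
  using bal by (simp add: min_def; arith)

lemma main: "card (NC2 s) = 1 + min n1 (min m1 (min n2 m2)) \<and>
             card (NC s) = 1 + 2 * min n1 (min m1 (min n2 m2))"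
proof
  have i0: "inj_on (\<lambda>(k,q). Expl k q) Par0" using Expl_inj by (rule inj_on_subset) (auto simp: Par0_def)
  show "card (NC2 s) = 1 + min n1 (min m1 (min n2 m2))"
    unfolding NC2_eq card_image[OF i0] card_Par0 mu by simp
  show "card (NC s) = 1 + 2 * min n1 (min m1 (min n2 m2))"
    unfolding NC_eq card_image[OF Expl_inj] card_Par mu by simp
qed

end

theorem theorem3p8:
  fixes n1 m1 n2 m2 :: nat
  assumes "n1 \<ge> 1" and "m1 \<ge> 1" and "n2 \<ge> 1" and "m2 \<ge> 1"
    and "n1 + n2 = m1 + m2"
  shows "card (NC2 (word4 n1 m1 n2 m2)) = 1 + min n1 (min m1 (min n2 m2)) \<and>
         card (NC (word4 n1 m1 n2 m2)) = 1 + 2 * min n1 (min m1 (min n2 m2))"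
proof -
  interpret W n1 m1 n2 m2 using assms by unfold_locales
  show ?thesis using main .
qed


end
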